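(* Let $S\subseteq\mathcal{D}$. If $S$ is $\mathcal{I}$-minimized (resp. $\mathcal{I}$-maximized), then every probability distribution $\lambda$ on $\mathcal{D}$ supported on $S$ satisfies $C_{11}(\lambda)=\underline{C}_{11}(W_\lambda)$ (resp. $C_{11}(\lambda)=\overline{C}_{11}(W_\lambda)$), where $W_\lambda=\sum_D\lambda_DD$. As a consequence, every nonempty subset of $S$ is also $\mathcal{I}$-minimized (resp. $\mathcal{I}$-maximized).
   Context: Channels from $\{1,\dots,m\}$ to $\{1,\dots,n\}$ are $m\times n$ row-stochastic matrices; $\mathcal{D}$ is the set of deterministic (0-1) channels, $\mathrm{rank}(D)$ the matrix rank. For a channel $W$, $\Lambda(W)=\{\lambda\text{ probability distribution on }\mathcal{D}: W=\sum_D\lambda_DD\}$, $C_{11}(\lambda)=\sum_D\lambda_D\log_2\mathrm{rank}(D)$, $\underline{C}_{11}(W)=\inf_{\lambda\in\Lambda(W)}C_{11}(\lambda)$, $\overline{C}_{11}(W)=\sup_{\lambda\in\Lambda(W)}C_{11}(\lambda)$. A subset $S\subseteq\mathcal{D}$ is $\mathcal{I}$-minimized (resp. $\mathcal{I}$-maximized) if there is a probability distribution $\lambda$ on $\mathcal{D}$ with $\mathrm{supp}(\lambda)=S$ and $C_{11}(\lambda)=\underline{C}_{11}(W)$ (resp. $=\overline{C}_{11}(W)$), where $W=\sum_D\lambda_DD$. "Supported on $S$" means $\lambda_D=0$ for $D\notin S$. *)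

theory Defs
  imports "HOL-Analysis.Analysis"
begin

text \<open>Channels from {1..m} to {1..n} are m x n row-stochastic real matrices,
  rendered as elements of type real^'n^'m (rows indexed by 'm, columns by 'n).\<close>

definition deterministic :: "real^'n^'m \<Rightarrow> bool" where
  "deterministic D \<longleftrightarrow> (\<forall>i j. D$i$j = 0 \<or> D$i$j = 1) \<and> (\<forall>i. (\<Sum>j\<in>UNIV. D$i$j) = 1)"

definition Dset :: "(real^'n^'m) set" where
  "Dset = {D. deterministic D}"

definition is_dist :: "(real^'n^'m \<Rightarrow> real) \<Rightarrow> bool" where
  "is_dist lam \<longleftrightarrow> (\<forall>D. 0 \<le> lam D) \<and> (\<forall>D. D \<notin> Dset \<longrightarrow> lam D = 0)
     \<and> (\<Sum>D\<in>Dset. lam D) = 1"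

definition supp :: "(real^'n^'m \<Rightarrow> real) \<Rightarrow> (real^'n^'m) set" where
  "supp lam = {D. lam D \<noteq> 0}"

definition mix :: "(real^'n^'m \<Rightarrow> real) \<Rightarrow> real^'n^'m" where
  "mix lam = (\<Sum>D\<in>Dset. lam D *\<^sub>R D)"

definition C11 :: "(real^'n^'m \<Rightarrow> real) \<Rightarrow> real" where
  "C11 lam = (\<Sum>D\<in>Dset. lam D * log 2 (real (rank D)))"

definition Lambda :: "real^'n^'m \<Rightarrow> (real^'n^'m \<Rightarrow> real) set" where
  "Lambda W = {lam. is_dist lam \<and> mix lam = W}"

definition C11_lower :: "real^'n^'m \<Rightarrow> real" where
  "C11_lower W = (INF lam\<in>Lambda W. C11 lam)"

definition C11_upper :: "real^'n^'m \<Rightarrow> real" where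
  "C11_upper W = (SUP lam\<in>Lambda W. C11 lam)"

definition I_minimized :: "(real^'n^'m) set \<Rightarrow> bool" where
  "I_minimized S \<longleftrightarrow> (\<exists>lam. is_dist lam \<and> supp lam = S \<and> C11 lam = C11_lower (mix lam))"

definition I_maximized :: "(real^'n^'m) set \<Rightarrow> bool" where
  "I_maximized S \<longleftrightarrow> (\<exists>lam. is_dist lam \<and> supp lam = S \<and> C11 lam = C11_upper (mix lam))"

end

theory Submission
  imports Defs
begin

lemma finite_vecset:
  assumes "finite (A :: 'a set)"
  shows "finite {v :: 'a^'b. \<forall>i. v$i \<in> A}"
proof -
  have "{v :: 'a^'b. \<forall>i. v$i \<in> A} \<subseteq> vec_lambda ` {f. \<forall>x. (x \<in> (UNIV::'b set) \<longrightarrow> f x \<in> A) \<and> (x \<notin> UNIV \<longrightarrow> f x = undefined)}"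
  proof
    fix v :: "'a^'b" assume "v \<in> {v. \<forall>i. v$i \<in> A}"
    then show "v \<in> vec_lambda ` {f. \<forall>x. (x \<in> (UNIV::'b set) \<longrightarrow> f x \<in> A) \<and> (x \<notin> UNIV \<longrightarrow> f x = undefined)}"
      by (intro image_eqI[where x="vec_nth v"]) auto
  qed
  moreover have "finite {f. \<forall>x. (x \<in> (UNIV::'b set) \<longrightarrow> f x \<in> A) \<and> (x \<notin> UNIV \<longrightarrow> f x = undefined)}"
    by (rule finite_set_of_finite_funs) (auto simp: assms)
  ultimately show ?thesis by (meson finite_imageI finite_subset)
qed

lemma finite_Dset: "finite (Dset :: (real^'n^'m) set)"
proof -
  let ?R = "{r :: real^'n. \<forall>j. r$j \<in> {0,1}}"
  have fR: "finite ?R" by (rule finite_vecset) simp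
  have "finite {D :: real^'n^'m. \<forall>i. D$i \<in> ?R}" by (rule finite_vecset[OF fR])
  moreover have "Dset \<subseteq> {D :: real^'n^'m. \<forall>i. D$i \<in> ?R}"
    by (auto simp: Dset_def deterministic_def)
  ultimately show ?thesis by (rule finite_subset[rotated])
qed

lemma C11_comb: "C11 (\<lambda>D. a * f D + b * g D) = a * C11 f + b * C11 g"
  by (simp add: C11_def algebra_simps sum.distrib sum_distrib_left)

lemma mix_comb: "mix (\<lambda>D. a * f D + b * g D) = a *\<^sub>R mix f + b *\<^sub>R mix g"
  by (simp add: mix_def scaleR_add_left scaleR_sum_right sum.distrib)

lemma dist_comb:
  assumes "is_dist f" "is_dist g" "0 \<le> a" "0 \<le> b" "a + b = 1"
  shows "is_dist (\<lambda>D. a * f D + b * g D)"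
  using assms by (simp add: is_dist_def sum.distrib sum_distrib_left[symmetric])

lemma dist_le1:
  assumes "is_dist f" shows "f D \<le> 1"
proof (cases "D \<in> Dset")
  case True
  have "f D \<le> (\<Sum>E\<in>Dset. f E)"
    by (rule member_le_sum) (use assms True finite_Dset in \<open>auto simp: is_dist_def\<close>)
  then show ?thesis using assms by (simp add: is_dist_def)
next
  case False then show ?thesis using assms by (simp add: is_dist_def)
qed

lemma split_dist:
  assumes mu: "is_dist (mu :: real^'n^'m \<Rightarrow> real)" and la: "is_dist la"
    and sub: "\<forall>D. D \<notin> supp mu \<longrightarrow> la D = 0"
  shows "\<exists>t nu. 0 < t \<and> t < 1 \<and> is_dist nu \<and> mu = (\<lambda>D. t * la D + (1 - t) * nu D)"
proof -
  have fS: "finite (supp mu)"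
    using mu finite_Dset by (rule_tac finite_subset[of _ Dset]) (auto simp: is_dist_def supp_def)
  have ne: "supp mu \<noteq> {}"
  proof
    assume "supp mu = {}"
    then have "\<forall>D. mu D = 0" by (auto simp: supp_def)
    then show False using mu by (simp add: is_dist_def)
  qed
  define m where "m = Min (mu ` supp mu)"
  have mpos: "0 < m"
    unfolding m_def using fS ne mu by (subst Min_gr_iff) (auto simp: supp_def is_dist_def order_le_less)
  define t where "t = m / 2"
  have tpos: "0 < t" and tle: "t < 1"
  proof -
    obtain D where "D \<in> supp mu" using ne by auto
    then have "m \<le> mu D" unfolding m_def using fS by auto
    then have "m \<le> 1" using dist_le1[OF mu] by (meson order_trans)
    then show "0 < t" "t < 1" using mpos by (auto simp: t_def)
  qed
  have tla: "t * la D \<le> mu D" for D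
  proof (cases "D \<in> supp mu")
    case True
    then have "m \<le> mu D" unfolding m_def using fS by auto
    moreover have "la D \<le> 1" "0 \<le> la D" using dist_le1[OF la] la by (auto simp: is_dist_def)
    ultimately have "m * la D \<le> m" using mpos by (simp add: mult_left_le)
    then show ?thesis using \<open>m \<le> mu D\<close> mpos unfolding t_def by linarith
  next
    case False then show ?thesis using sub mu by (simp add: is_dist_def supp_def)
  qed
  define nu where "nu = (\<lambda>D. (mu D - t * la D) / (1 - t))"
  have "is_dist nu"
  proof -
    have "(\<Sum>D\<in>Dset. nu D) = ((\<Sum>D\<in>Dset. mu D) - t * (\<Sum>D\<in>Dset. la D)) / (1 - t)"
      by (simp add: nu_def sum_divide_distrib[symmetric] sum_subtractf sum_distrib_left)
    also have "\<dots> = 1" using mu la tle by (simp add: is_dist_def)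
    finally show ?thesis using mu la tla tle by (auto simp: is_dist_def nu_def)
  qed
  moreover have "mu = (\<lambda>D. t * la D + (1 - t) * nu D)"
    using tle by (auto simp: nu_def)
  ultimately show ?thesis using tpos tle by blast
qed

lemma log_rank_nonneg: "0 \<le> log 2 (real (k::nat))"
  by (cases "k = 0") (auto simp: log_def)

lemma C11_nonneg: "is_dist lam \<Longrightarrow> 0 \<le> C11 lam"
  unfolding C11_def is_dist_def
  by (intro sum_nonneg mult_nonneg_nonneg) (auto simp: log_rank_nonneg)

lemma C11_bounded:
  fixes lam :: "real^'n^'m \<Rightarrow> real"
  assumes d: "is_dist lam"
  shows "C11 lam \<le> Max ((\<lambda>D. log 2 (real (rank D))) ` (Dset :: (real^'n^'m) set))"
    (is "_ \<le> ?M")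
proof -
  have "C11 lam \<le> (\<Sum>D\<in>Dset. lam D * ?M)"
    unfolding C11_def
    by (intro sum_mono mult_left_mono Max_ge finite_imageI finite_Dset imageI) (use d in \<open>auto simp: is_dist_def\<close>)
  also have "\<dots> = ?M" using d by (simp add: sum_distrib_right[symmetric] is_dist_def)
  finally show ?thesis .
qed

lemma min_part:
  assumes "I_minimized (S :: (real^'n^'m) set)" "is_dist lam" "\<forall>D. D \<notin> S \<longrightarrow> lam D = 0"
  shows "C11 lam = C11_lower (mix lam)"
proof -
  obtain mu where mu: "is_dist mu" "supp mu = S" "C11 mu = C11_lower (mix mu)"
    using assms(1) by (auto simp: I_minimized_def)
  obtain t nu where tn: "0 < t" "t < 1" "is_dist nu" "mu = (\<lambda>D. t * lam D + (1 - t) * nu D)"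
    using split_dist[OF mu(1) assms(2)] assms(3) mu(2) by blast
  have bdd: "bdd_below (C11 ` Lambda W)" for W :: "real^'n^'m"
    by (rule bdd_belowI[where m=0]) (auto simp: Lambda_def C11_nonneg)
  have ne: "Lambda (mix lam) \<noteq> {}" using assms(2) by (auto simp: Lambda_def)
  have "C11 lam \<le> C11_lower (mix lam)"
    unfolding C11_lower_def
  proof (rule cINF_greatest[OF ne])
    fix l' assume "l' \<in> Lambda (mix lam)"
    then have l': "is_dist l'" "mix l' = mix lam" by (auto simp: Lambda_def)
    let ?mu' = "\<lambda>D. t * l' D + (1 - t) * nu D"
    have "?mu' \<in> Lambda (mix mu)"
      using l' tn by (auto simp: Lambda_def mix_comb intro!: dist_comb)
    then have "C11 mu \<le> C11 ?mu'"
      using mu(3) unfolding C11_lower_def by (metis bdd cINF_lower)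
    then have "t * C11 lam \<le> t * C11 l'" using tn by (simp add: C11_comb)
    then show "C11 lam \<le> C11 l'" using tn by simp
  qed
  moreover have "C11_lower (mix lam) \<le> C11 lam"
    unfolding C11_lower_def using assms(2) by (intro cINF_lower[OF bdd]) (auto simp: Lambda_def)
  ultimately show ?thesis by simp
qed

lemma max_part:
  assumes "I_maximized (S :: (real^'n^'m) set)" "is_dist lam" "\<forall>D. D \<notin> S \<longrightarrow> lam D = 0"
  shows "C11 lam = C11_upper (mix lam)"
proof -
  obtain mu where mu: "is_dist mu" "supp mu = S" "C11 mu = C11_upper (mix mu)"
    using assms(1) by (auto simp: I_maximized_def)
  obtain t nu where tn: "0 < t" "t < 1" "is_dist nu" "mu = (\<lambda>D. t * lam D + (1 - t) * nu D)"
    using split_dist[OF mu(1) assms(2)] assms(3) mu(2) by blast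
  have bdd: "bdd_above (C11 ` Lambda W)" for W :: "real^'n^'m"
    by (rule bdd_aboveI) (auto simp: Lambda_def intro: C11_bounded)
  have ne: "Lambda (mix lam) \<noteq> {}" using assms(2) by (auto simp: Lambda_def)
  have "C11_upper (mix lam) \<le> C11 lam"
    unfolding C11_upper_def
  proof (rule cSUP_least[OF ne])
    fix l' assume "l' \<in> Lambda (mix lam)"
    then have l': "is_dist l'" "mix l' = mix lam" by (auto simp: Lambda_def)
    let ?mu' = "\<lambda>D. t * l' D + (1 - t) * nu D"
    have "?mu' \<in> Lambda (mix mu)"
      using l' tn by (auto simp: Lambda_def mix_comb intro!: dist_comb)
    then have "C11 ?mu' \<le> C11 mu"
      using mu(3) unfolding C11_upper_def by (metis bdd cSUP_upper)
    then have "t * C11 l' \<le> t * C11 lam" using tn by (simp add: C11_comb)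
    then show "C11 l' \<le> C11 lam" using tn by simp
  qed
  moreover have "C11 lam \<le> C11_upper (mix lam)"
    unfolding C11_upper_def using assms(2) by (intro cSUP_upper[OF _ bdd]) (auto simp: Lambda_def)
  ultimately show ?thesis by simp
qed

lemma uniform_dist:
  assumes "(T :: (real^'n^'m) set) \<subseteq> Dset" "T \<noteq> {}"
  shows "is_dist (\<lambda>D. if D \<in> T then 1 / real (card T) else 0)
     \<and> supp (\<lambda>D. if D \<in> T then 1 / real (card T) else 0) = T"
proof -
  have fT: "finite T" using assms(1) finite_Dset finite_subset by blast
  then have cT: "card T > 0" using assms(2) by (simp add: card_gt_0_iff)
  have "(\<Sum>D\<in>Dset. if D \<in> T then 1 / real (card T) else 0) = (\<Sum>D\<in>T. 1 / real (card T))"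
    using assms(1) finite_Dset by (intro sum.mono_neutral_cong_right) auto
  also have "\<dots> = 1" using cT by simp
  finally show ?thesis using assms cT by (auto simp: is_dist_def supp_def)
qed

theorem proposition3:
  fixes S :: "(real^'n^'m) set"
  assumes "S \<subseteq> Dset"
  shows "(I_minimized S \<longrightarrow>
            (\<forall>lam. is_dist lam \<and> (\<forall>D. D \<notin> S \<longrightarrow> lam D = 0) \<longrightarrow> C11 lam = C11_lower (mix lam))
          \<and> (\<forall>T. T \<subseteq> S \<and> T \<noteq> {} \<longrightarrow> I_minimized T))
       \<and> (I_maximized S \<longrightarrow>
            (\<forall>lam. is_dist lam \<and> (\<forall>D. D \<notin> S \<longrightarrow> lam D = 0) \<longrightarrow> C11 lam = C11_upper (mix lam))
          \<and> (\<forall>T. T \<subseteq> S \<and> T \<noteq> {} \<longrightarrow> I_maximized T))"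
proof (intro conjI impI allI)
  fix T assume m: "I_minimized S" and T: "T \<subseteq> S \<and> T \<noteq> {}"
  let ?l = "\<lambda>D. if D \<in> T then 1 / real (card T) else 0"
  have u: "is_dist ?l" "supp ?l = T" using uniform_dist[of T] T assms by auto
  have "C11 ?l = C11_lower (mix ?l)" using min_part[OF m u(1)] T by (auto simp: subset_iff)
  then show "I_minimized T" using u unfolding I_minimized_def by blast
next
  fix T assume m: "I_maximized S" and T: "T \<subseteq> S \<and> T \<noteq> {}"
  let ?l = "\<lambda>D. if D \<in> T then 1 / real (card T) else 0"
  have u: "is_dist ?l" "supp ?l = T" using uniform_dist[of T] T assms by auto
  have "C11 ?l = C11_upper (mix ?l)" using max_part[OF m u(1)] T by (auto simp: subset_iff)
  then show "I_maximized T" using u unfolding I_maximized_def by blast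
next
  show "I_minimized S \<Longrightarrow> is_dist lam \<and> (\<forall>D. D \<notin> S \<longrightarrow> lam D = 0) \<Longrightarrow> C11 lam = C11_lower (mix lam)" for lam
    using min_part by blast
next
  show "I_maximized S \<Longrightarrow> is_dist lam \<and> (\<forall>D. D \<notin> S \<longrightarrow> lam D = 0) \<Longrightarrow> C11 lam = C11_upper (mix lam)" for lam
    using max_part by blast
qed

end
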